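(* Let $\mathbb{F}$ be a field, $m,b\in\mathbb{F}$ with $m\ne0$, $m\neq1$, let $\mathfrak{A}$ be the unital associative $\mathbb{F}$-algebra generated by $A,B$ subject to $AB=mBA+bI$, and let $C=AB-BA$. For every positive integer $k$, $$(1-m^{k+1})C^{k+1}=(1-m^k)\,b\,C^k-\frac{\big((\mathrm{ad}\,B)\circ(\mathrm{ad}\,C)^k\big)(A)}{(1-m)^{k-1}m^{-k}}.$$
   Context: $[P,Q]=PQ-QP$; for $U\in\mathfrak{A}$, $\mathrm{ad}\,U:\mathfrak{A}\to\mathfrak{A}$ is $V\mapsto[U,V]$, and $(\mathrm{ad}\,U)^k$ is its $k$-fold composition. *)

theory Defs
  imports Main
begin

text \<open>A unital associative algebra over a field 'f is modelled as a ring 'a together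
with a unital ring homomorphism from 'f into the centre of 'a (the structure map
c \<mapsto> c I); scalar multiplication c . U is phi c * U.\<close>
definition algebra_structure_map :: "('f::field \<Rightarrow> 'a::ring_1) \<Rightarrow> bool" where
  "algebra_structure_map phi \<longleftrightarrow>
     phi 1 = 1 \<and>
     (\<forall>x y. phi (x + y) = phi x + phi y) \<and>
     (\<forall>x y. phi (x * y) = phi x * phi y) \<and>
     (\<forall>x U. phi x * U = U * phi x)"

definition commutator :: "'a::ring \<Rightarrow> 'a \<Rightarrow> 'a" where
  "commutator P Q = P * Q - Q * P"

definition ad :: "'a::ring \<Rightarrow> 'a \<Rightarrow> 'a" where
  "ad U = (\<lambda>V. commutator U V)"

end

theory Submission
  imports Defs
begin

context
  fixes phi :: "'f::field \<Rightarrow> 'a::ring_1"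
  assumes H: "algebra_structure_map phi"
begin

lemma P1: "phi 1 = 1" using H unfolding algebra_structure_map_def by blast
lemma Padd: "phi (x + y) = phi x + phi y" using H unfolding algebra_structure_map_def by blast
lemma Pmult: "phi (x * y) = phi x * phi y" using H unfolding algebra_structure_map_def by blast
lemma Pcomm: "phi x * U = U * phi x" using H unfolding algebra_structure_map_def by blast
lemma P0: "phi 0 = 0"
proof -
  have "phi 0 = phi 0 + phi 0" using Padd[of 0 0] by simp
  then show ?thesis by simp
qed
lemma Pneg: "phi (- x) = - phi x"
proof -
  have "phi (- x) + phi x = 0" using Padd[of "-x" x] P0 by simp
  then show ?thesis by (simp add: eq_neg_iff_add_eq_0)
qed
lemma Pdiff: "phi (x - y) = phi x - phi y"
  using Padd[of x "-y"] Pneg[of y] by simp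
lemma Psm: "phi a * (phi c * U) = phi (a*c) * U" by (simp add: Pmult mult.assoc)
lemma Pcomb: "phi a * U + phi c * U = phi (a+c) * U" by (simp add: Padd distrib_right)
lemma Pcomb2: "phi a * U - phi c * U = phi (a-c) * U" by (simp add: Pdiff left_diff_distrib)
lemma Pright: "U * (phi a * V) = phi a * (U * V)"
proof -
  have "U * (phi a * V) = (U * phi a) * V" by (simp add: mult.assoc)
  also have "\<dots> = (phi a * U) * V" by (simp only: Pcomm[of a U])
  finally show ?thesis by (simp add: mult.assoc)
qed

end

theorem lemma4p6:
  fixes phi :: "'f::field \<Rightarrow> 'a::ring_1"
    and m b :: 'f and A B :: 'a and k :: nat
  assumes "algebra_structure_map phi"
    and "m \<noteq> 0" and "m \<noteq> 1"
    and "A * B = phi m * (B * A) + phi b"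
    and "k \<ge> 1"
  shows "let C = A * B - B * A in
     phi (1 - m ^ (k + 1)) * C ^ (k + 1)
       = phi ((1 - m ^ k) * b) * C ^ k
         - phi (inverse ((1 - m) ^ (k - 1) * inverse (m ^ k))) * (ad B \<circ> (ad C ^^ k)) A"
proof -
  note H = assms(1)
  note P1 = P1[OF H] and Padd = Padd[OF H] and Pmult = Pmult[OF H] and Pcomm = Pcomm[OF H]
    and Pdiff = Pdiff[OF H] and Psm = Psm[OF H] and Pcomb = Pcomb[OF H] and Pcomb2 = Pcomb2[OF H]
    and Pright = Pright[OF H] and P0 = P0[OF H] and Pr1 = Pcomm[symmetric]
  define x where "x = B * A"
  define C where "C = A * B - B * A"
  have AB: "A * B = phi m * x + phi b" using assms(4) x_def by simp
  have Cx: "C = phi (m - 1) * x + phi b"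
    unfolding C_def AB x_def[symmetric] by (simp add: Pdiff P1 left_diff_distrib)
  have AC: "A * C = phi m * (C * A)"
  proof -
    have "A * C = phi (m-1) * ((A * B) * A) + phi b * A"
      unfolding Cx x_def by (simp add: distrib_left Pright mult.assoc Pcomm[of b A])
    also have "\<dots> = phi ((m-1)*m) * (x * A) + phi ((m-1)*b + b) * A"
      unfolding AB by (simp only: distrib_right distrib_left mult.assoc Psm add.assoc Pcomb)
    also have "\<dots> = phi (m*(m-1)) * (x * A) + phi (m*b) * A"
      by (simp add: algebra_simps)
    also have "\<dots> = phi m * (C * A)"
      unfolding Cx by (simp only: distrib_right distrib_left mult.assoc Psm)
    finally show ?thesis .
  qed
  have CB: "C * B = phi m * (B * C)"
  proof -
    have "C * B = phi (m-1) * (B * (A * B)) + phi b * B"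
      unfolding Cx x_def by (simp only: distrib_right mult.assoc)
    also have "\<dots> = phi ((m-1)*m) * (B * x) + phi ((m-1)*b + b) * B"
      unfolding AB by (simp only: distrib_right distrib_left mult.assoc Psm Pright[of B] add.assoc Pcomb Pcomm[of b B, symmetric])
    also have "\<dots> = phi (m*(m-1)) * (B * x) + phi (m*b) * B"
      by (simp add: algebra_simps)
    also have "\<dots> = phi m * (B * C)"
      unfolding Cx by (simp only: distrib_right distrib_left mult.assoc Psm Pright[of B] Pcomm[of b B, symmetric])
    finally show ?thesis .
  qed
  have CkB: "C ^ n * B = phi (m ^ n) * (B * C ^ n)" for n
  proof (induction n)
    case 0 then show ?case by (simp add: P1)
  next
    case (Suc n)
    have "C ^ Suc n * B = C * (C ^ n * B)" by (simp add: mult.assoc)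
    also have "\<dots> = phi (m ^ n) * ((C * B) * C ^ n)"
      unfolding Suc by (simp only: Pright[of C] mult.assoc)
    also have "\<dots> = phi (m ^ Suc n) * (B * C ^ Suc n)"
      unfolding CB by (simp only: mult.assoc Psm Pright[of C] power_Suc mult.commute)
    finally show ?case .
  qed
  have ACk: "A * C ^ n = phi (m ^ n) * (C ^ n * A)" for n
  proof (induction n)
    case 0 then show ?case by (simp add: P1)
  next
    case (Suc n)
    have "A * C ^ Suc n = (A * C ^ n) * C" by (simp add: mult.assoc power_Suc2 del: power_Suc)
    also have "\<dots> = phi (m ^ n) * (C ^ n * (A * C))"
      unfolding Suc by (simp only: mult.assoc)
    also have "\<dots> = phi (m ^ Suc n) * (C ^ Suc n * A)"
      unfolding AC Pright[of "C^n"] Psm by (simp add: mult.assoc power_Suc2 mult.commute del: power_Suc)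
    finally show ?case .
  qed
  have adk: "(ad C ^^ n) A = phi ((1 - m) ^ n) * (C ^ n * A)" for n
  proof (induction n)
    case 0 then show ?case by (simp add: P1)
  next
    case (Suc n)
    have e1: "C * (phi ((1 - m) ^ n) * (C ^ n * A)) = phi ((1 - m) ^ n) * (C ^ Suc n * A)"
      by (simp only: Pright[of C] mult.assoc power_Suc)
    have e2: "phi ((1 - m) ^ n) * (C ^ n * A) * C = phi ((1 - m) ^ n * m) * (C ^ Suc n * A)"
      by (simp only: mult.assoc AC Pright[of "C^n"] Psm power_Suc2)
    have "(ad C ^^ Suc n) A = C * (phi ((1 - m) ^ n) * (C ^ n * A)) - phi ((1 - m) ^ n) * (C ^ n * A) * C"
      using Suc by (simp add: ad_def commutator_def)
    also have "\<dots> = phi ((1 - m) ^ n - (1 - m) ^ n * m) * (C ^ Suc n * A)"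
      unfolding e1 e2 Pcomb2 ..
    also have "(1 - m) ^ n - (1 - m) ^ n * m = (1 - m) ^ Suc n" by (simp add: algebra_simps)
    finally show ?case .
  qed
  define K where "K = C ^ k"
  define sc where "sc = (1 - m) ^ k"
  define ii where "ii = inverse (m ^ k)"
  define D where "D = inverse ((1 - m) ^ (k - 1) * inverse (m ^ k))"
  have mk: "m ^ k \<noteq> 0" using assms(2) by simp
  have BK: "B * K = phi ii * (K * B)"
    unfolding K_def ii_def CkB Psm using mk by (simp add: P1)
  have adB: "(ad B \<circ> (ad C ^^ k)) A = phi (sc * (ii - m)) * (K * x) - phi (sc * b) * K"
  proof -
    have "(ad B \<circ> (ad C ^^ k)) A = B * (phi sc * (K * A)) - phi sc * (K * A) * B"
      by (simp only: comp_apply adk) (simp add: ad_def commutator_def K_def sc_def)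
    also have "\<dots> = phi sc * ((B * K) * A) - phi sc * (K * (A * B))"
      by (simp only: Pright[of B] mult.assoc)
    also have "\<dots> = phi sc * (phi ii * (K * x)) - phi sc * (phi m * (K * x) + phi b * K)"
      unfolding BK AB by (simp only: Pright[of K] mult.assoc distrib_left x_def Pcomm[of b K, symmetric])
    also have "\<dots> = phi (sc * ii) * (K * x) - (phi (sc * m) * (K * x) + phi (sc * b) * K)"
      by (simp only: Psm distrib_left)
    also have "\<dots> = phi (sc * ii - sc * m) * (K * x) - phi (sc * b) * K"
      by (simp add: Pcomb2[symmetric] algebra_simps)
    finally show ?thesis by (simp add: right_diff_distrib)
  qed
  have Ck1: "C ^ (k + 1) = phi (m - 1) * (K * x) + phi b * K"
  proof -
    have "C ^ (k + 1) = C ^ k * C" by (simp add: power_Suc2 del: power_Suc)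
    also have "\<dots> = C ^ k * (phi (m - 1) * x + phi b)" by (subst (2) Cx) (rule refl)
    finally show ?thesis unfolding K_def by (simp only: distrib_left Pright[of "C^k"] Pcomm[of b "C^k"])
  qed
  have Dsc: "D * sc = (1 - m) * m ^ k"
  proof -
    obtain j where kj: "k = Suc j" using assms(5) by (cases k) auto
    have "1 - m \<noteq> 0" using assms(3) by simp
    then show ?thesis unfolding D_def sc_def kj using assms(2)
      by (simp add: field_simps)
  qed
  have lhs: "phi (1 - m ^ (k + 1)) * C ^ (k + 1)
      = phi ((1 - m ^ (k + 1)) * (m - 1)) * (K * x) + phi ((1 - m ^ (k + 1)) * b) * K"
    unfolding Ck1 by (simp only: distrib_left Psm)
  have rhs: "phi ((1 - m ^ k) * b) * C ^ k - phi D * (phi (sc * (ii - m)) * (K * x) - phi (sc * b) * K)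
      = phi (- (D * (sc * (ii - m)))) * (K * x) + phi ((1 - m ^ k) * b + D * (sc * b)) * K"
  proof -
    have g: "\<And>a c d::'a. a - (c - d) = - c + (a + d)" by (simp add: algebra_simps)
    show ?thesis
      unfolding K_def[symmetric] right_diff_distrib Psm Pneg[OF H] Padd distrib_right g
      by (simp only: minus_mult_left)
  qed
  have c1: "(1 - m ^ (k + 1)) * (m - 1) = - (D * (sc * (ii - m)))"
  proof -
    have "D * (sc * (ii - m)) = (1 - m) * m ^ k * (ii - m)" using Dsc by (simp add: mult.assoc[symmetric])
    also have "\<dots> = (1 - m) * (1 - m ^ (k+1))" unfolding ii_def using mk by (simp add: field_simps)
    finally show ?thesis by (simp add: algebra_simps)
  qed
  have c2: "(1 - m ^ (k + 1)) * b = (1 - m ^ k) * b + D * (sc * b)"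
  proof -
    have "D * (sc * b) = (1 - m) * m ^ k * b" using Dsc by (simp add: mult.assoc[symmetric])
    then show ?thesis by (simp add: algebra_simps)
  qed
  show ?thesis
    unfolding Let_def C_def[symmetric] adB D_def[symmetric] lhs rhs c1 c2 ..

qed

end
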